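(* Let $k$ be a local field and $k_0$ its prime field. Let $(P_n)_n$ be a sequence of monic polynomials in $k[X]$ whose degrees tend to $+\infty$, and let $\xi_1,\dots,\xi_m\in k$. Then there exists $\xi\in k$, transcendental over $k_0(\xi_1,\dots,\xi_m)$, such that the sequence $(|P_n(\xi)|)_n$ is unbounded.
   Context: $|\cdot|$ is the absolute value of the local field $k$. *)

theory Defs
  imports Complex_Main "HOL-Computational_Algebra.Polynomial"
begin

definition is_abs_value :: "('a::field \<Rightarrow> real) \<Rightarrow> bool" where
  "is_abs_value f \<longleftrightarrow>
     (\<forall>x. f x \<ge> 0) \<and> (\<forall>x. f x = 0 \<longleftrightarrow> x = 0) \<and>
     (\<forall>x y. f (x * y) = f x * f y) \<and> (\<forall>x y. f (x + y) \<le> f x + f y)"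

text \<open>A local field: a field with a nontrivial absolute value whose induced metric
  topology is locally compact, i.e. the closed unit ball is (sequentially) compact.\<close>
definition local_field :: "('a::field \<Rightarrow> real) \<Rightarrow> bool" where
  "local_field f \<longleftrightarrow> is_abs_value f \<and> (\<exists>x. f x \<noteq> 0 \<and> f x \<noteq> 1) \<and>
     (\<forall>s::nat \<Rightarrow> 'a. (\<forall>n. f (s n) \<le> 1) \<longrightarrow>
        (\<exists>r L. strict_mono r \<and> f L \<le> 1 \<and> (\<lambda>n. f (s (r n) - L)) \<longlonglongrightarrow> 0))"

definition is_subfield :: "'a::field set \<Rightarrow> bool" where
  "is_subfield S \<longleftrightarrow> 0 \<in> S \<and> 1 \<in> S \<and> (\<forall>x\<in>S. \<forall>y\<in>S. x + y \<in> S \<and> x * y \<in> S) \<and>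
     (\<forall>x\<in>S. - x \<in> S \<and> inverse x \<in> S)"

text \<open>Subfield generated by X; for X = {} this is the prime field, so
  gen_subfield X = k0(X).\<close>
definition gen_subfield :: "'a::field set \<Rightarrow> 'a set" where
  "gen_subfield X = \<Inter>{S. is_subfield S \<and> X \<subseteq> S}"

definition transcendental_over :: "'a::field set \<Rightarrow> 'a \<Rightarrow> bool" where
  "transcendental_over K x \<longleftrightarrow>
     (\<forall>p::'a poly. p \<noteq> 0 \<and> (\<forall>i. coeff p i \<in> K) \<longrightarrow> poly p x \<noteq> 0)"

end

theory Submission
  imports Defs "HOL-Library.Countable_Set"
begin

locale av =
  fixes f :: "'a::field \<Rightarrow> real"
  assumes isav: "is_abs_value f"
begin

lemma nonneg[simp]: "f x \<ge> 0" using isav unfolding is_abs_value_def by blast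
lemma zero_iff[simp]: "f x = 0 \<longleftrightarrow> x = 0" using isav unfolding is_abs_value_def by blast
lemma mult[simp]: "f (x * y) = f x * f y" using isav unfolding is_abs_value_def by blast
lemma tri: "f (x + y) \<le> f x + f y" using isav unfolding is_abs_value_def by blast

lemma f0[simp]: "f 0 = 0" by simp
lemma f1[simp]: "f 1 = 1"
proof -
  have "f 1 = f 1 * f 1" using mult[of 1 1] by simp
  moreover have "f 1 \<noteq> 0" by simp
  ultimately show ?thesis by (metis mult_cancel_left1)
qed
lemma fm1[simp]: "f (-1) = 1"
proof -
  have "f (-1) * f (-1) = 1" using mult[of "-1" "-1"] by simp
  moreover have "f (-1) \<ge> 0" by simp
  ultimately show ?thesis
    by (metis abs_of_nonneg abs_square_eq_1 power2_eq_square)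
qed
lemma fneg[simp]: "f (- x) = f x"
  using mult[of "-1" x] by simp
lemma fsym: "f (x - y) = f (y - x)"
  using fneg[of "x - y"] by simp
lemma fpow[simp]: "f (x ^ n) = f x ^ n"
  by (induction n) auto
lemma finv[simp]: "f (inverse x) = inverse (f x)"
proof (cases "x = 0")
  case False
  have "f x * f (inverse x) = 1" using mult[of x "inverse x"] False by simp
  moreover have "f x \<noteq> 0" using False by simp
  ultimately show ?thesis by (simp add: inverse_eq_divide eq_divide_eq mult.commute)
qed simp
lemma fdiv[simp]: "f (x / y) = f x / f y"
  by (simp add: divide_inverse)
lemma tri_diff: "f (x - y) \<le> f x + f y"
  using tri[of x "-y"] by simp
lemma rev_tri: "f x - f y \<le> f (x - y)"
  using tri[of "x - y" y] by simp
lemma fprod: "f (prod g S) = (\<Prod>i\<in>S. f (g i))"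
  by (induction S rule: infinite_finite_induct) auto
lemma fsum: "f (sum g S) \<le> (\<Sum>i\<in>S. f (g i))"
proof (induction S rule: infinite_finite_induct)
  case (insert x F)
  then show ?case using tri[of "g x" "sum g F"] by simp
qed auto

end


locale lf = av +
  assumes loc: "local_field f"
begin

lemma nontriv: "\<exists>x. f x \<noteq> 0 \<and> f x \<noteq> 1"
  using conjunct1[OF conjunct2[OF loc[unfolded local_field_def]]] .

lemma seqcomp:
  fixes q :: "nat \<Rightarrow> 'a"
  assumes "\<forall>n. f (q n) \<le> 1"
  shows "\<exists>r L. strict_mono r \<and> f L \<le> 1 \<and> (\<lambda>n. f (q (r n) - L)) \<longlonglongrightarrow> 0"
proof -
  have H: "\<forall>q::nat \<Rightarrow> 'a. (\<forall>n. f (q n) \<le> 1) \<longrightarrow>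
        (\<exists>r L. strict_mono r \<and> f L \<le> 1 \<and> (\<lambda>n. f (q (r n) - L)) \<longlonglongrightarrow> 0)"
    by (rule conjunct2[OF conjunct2[OF loc[unfolded local_field_def]]])
  show ?thesis using mp[OF spec[OF H, of q] assms] .
qed

lemma exists_big: "\<exists>t. f t > 1"
proof -
  obtain x where x: "f x \<noteq> 0" "f x \<noteq> 1" using nontriv by blast
  show ?thesis
  proof (cases "f x > 1")
    case False
    then have "f x < 1" using x by simp
    moreover have "f x > 0" using x nonneg[of x] by linarith
    ultimately have "f (inverse x) > 1" by (simp add: one_less_inverse)
    thus ?thesis by blast
  qed blast
qed

lemma exists_large: "\<exists>t. f t \<ge> R"
proof -
  obtain t where t: "f t > 1" using exists_big by blast
  obtain n where "R < f t ^ n" using real_arch_pow[OF t] by blast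
  hence "f (t ^ n) \<ge> R" by simp
  thus ?thesis by blast
qed

lemma exists_small: "\<exists>s. s \<noteq> 0 \<and> f s \<le> e" if "e > 0"
proof -
  obtain t where t: "f t \<ge> inverse e" using exists_large by blast
  have ip: "inverse e > 0" using that by simp
  have ft: "f t > 0" using t ip by linarith
  hence "t \<noteq> 0" by auto
  moreover have "inverse (f t) \<le> inverse (inverse e)"
    using t ip by (intro le_imp_inverse_le) auto
  ultimately have "inverse t \<noteq> 0" "f (inverse t) \<le> e" using that by auto
  thus ?thesis by blast
qed

end

locale cantor = lf +
  fixes s :: "'a::field"
  assumes s0: "s \<noteq> 0" and ssmall: "f s \<le> 1/8"
begin

definition T :: "nat \<Rightarrow> (nat \<Rightarrow> bool) \<Rightarrow> 'a" where
  "T m e = (\<Sum>i<m. if e i then s ^ i else 0)"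

lemma sig_pos: "f s > 0" using s0 nonneg[of s] zero_iff[of s] by linarith

lemma T_step: "f (T (m + k) e - T m e) \<le> f s ^ m * (\<Sum>i<k. f s ^ i)"
proof (induction k)
  case (Suc k)
  have "T (m + Suc k) e - T m e = (T (m + k) e - T m e) + (if e (m + k) then s ^ (m + k) else 0)"
    by (simp add: T_def)
  also have "f \<dots> \<le> f (T (m + k) e - T m e) + f (if e (m + k) then s ^ (m + k) else 0)"
    by (rule tri)
  also have "f (if e (m + k) then s ^ (m + k) else 0) \<le> f s ^ m * f s ^ k"
    using sig_pos by (simp add: power_add)
  finally show ?case using Suc by (simp add: algebra_simps)
qed (simp add: T_def)

lemma geo_bound: "(\<Sum>i<k. f s ^ i) \<le> 8/7"
proof -
  have s1: "f s \<noteq> 1" using ssmall by auto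
  have "(\<Sum>i<k. f s ^ i) = (1 - f s ^ k) / (1 - f s)" using sum_gp_strict[of "f s" k] s1 by simp
  also have "\<dots> \<le> 1 / (1 - f s)"
    using ssmall sig_pos by (intro divide_right_mono) auto
  also have "\<dots> \<le> 8/7" using ssmall by (simp add: field_simps)
  finally show ?thesis .
qed

lemma T_tail: "m \<le> m' \<Longrightarrow> f (T m' e - T m e) \<le> 8/7 * f s ^ m"
proof -
  assume "m \<le> m'"
  then obtain k where k: "m' = m + k" by (metis le_add_diff_inverse)
  have "f (T m' e - T m e) \<le> f s ^ m * (\<Sum>i<k. f s ^ i)" using T_step k by simp
  also have "\<dots> \<le> f s ^ m * (8/7)" using geo_bound sig_pos by (intro mult_left_mono) auto
  finally show ?thesis by simp
qed

lemma T_bound: "f (T m e) \<le> 8/7"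
  using T_tail[of 0 m e] by (simp add: T_def)


lemma lim_ex: "\<exists>L. \<forall>m. f (T m e - L) \<le> 2 * f s ^ m"
proof -
  define q where "q n = s * T n e" for n
  have q1: "\<forall>n. f (q n) \<le> 1"
  proof
    fix n
    have "f (q n) = f s * f (T n e)" by (simp add: q_def)
    also have "\<dots> \<le> (1/8) * (8/7)" using ssmall T_bound[of n e] sig_pos
      by (intro mult_mono) auto
    finally show "f (q n) \<le> 1" by simp
  qed
  obtain r L0 where r: "strict_mono r" and conv: "(\<lambda>n. f (q (r n) - L0)) \<longlonglongrightarrow> 0"
    using seqcomp[OF q1] by blast
  define L where "L = L0 / s"
  have eq: "f (T n e - L) = f (q n - L0) / f s" for n
  proof -
    have "q n - L0 = s * (T n e - L)" using s0 by (simp add: q_def L_def algebra_simps)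
    thus ?thesis using sig_pos s0 by simp
  qed
  have "\<forall>m. f (T m e - L) \<le> 2 * f s ^ m"
  proof
    fix m
    have pos: "6/7 * f s ^ m * f s > 0" using sig_pos by simp
    from conv have "\<forall>\<^sub>F n in sequentially. f (q (r n) - L0) < 6/7 * f s ^ m * f s"
      using order_tendstoD(2)[OF conv pos] by simp
    then obtain N where N: "\<And>n. n \<ge> N \<Longrightarrow> f (q (r n) - L0) < 6/7 * f s ^ m * f s"
      unfolding eventually_sequentially by blast
    define n where "n = max N m"
    have rn: "r n \<ge> m" using strict_mono_imp_increasing[OF r, of n] by (simp add: n_def)
    have a: "f (T (r n) e - L) < 6/7 * f s ^ m"
      using N[of n] eq[of "r n"] sig_pos by (simp add: n_def field_simps)
    have b: "f (T m e - T (r n) e) \<le> 8/7 * f s ^ m"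
      using T_tail[OF rn, of e] fsym by simp
    have "f (T m e - L) \<le> f (T m e - T (r n) e) + f (T (r n) e - L)"
      using tri[of "T m e - T (r n) e" "T (r n) e - L"] by simp
    thus "f (T m e - L) \<le> 2 * f s ^ m" using a b by simp
  qed
  thus ?thesis by blast
qed

definition Lim :: "(nat \<Rightarrow> bool) \<Rightarrow> 'a" where
  "Lim e = (SOME L. \<forall>m. f (T m e - L) \<le> 2 * f s ^ m)"

lemma Lim_prop: "f (T m e - Lim e) \<le> 2 * f s ^ m"
  using someI_ex[OF lim_ex[of e]] unfolding Lim_def by blast

lemma Lim_bound: "f (Lim e) \<le> 2"
  using Lim_prop[of 0 e] by (simp add: T_def)

lemma sep:
  assumes "\<forall>i<l. e i = e' i" "e l \<noteq> e' l"
  shows "f (Lim e - Lim e') \<ge> f s ^ l / 2"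
proof -
  have Tl: "T l e = T l e'" unfolding T_def using assms(1) by (intro sum.cong) auto
  define D where "D = T (Suc l) e - T (Suc l) e'"
  have "D = (if e l then s ^ l else 0) - (if e' l then s ^ l else 0)"
    using Tl by (simp add: D_def T_def)
  hence fD: "f D = f s ^ l" using assms(2) by (cases "e l") auto
  have Deq: "D = (Lim e - Lim e') + (T (Suc l) e - Lim e) - (T (Suc l) e' - Lim e')"
    by (simp add: D_def)
  have "f D \<le> f ((Lim e - Lim e') + (T (Suc l) e - Lim e)) + f (T (Suc l) e' - Lim e')"
    by (subst Deq) (rule tri_diff)
  also have "\<dots> \<le> f (Lim e - Lim e') + f (T (Suc l) e - Lim e) + f (T (Suc l) e' - Lim e')"
    using tri[of "Lim e - Lim e'" "T (Suc l) e - Lim e"] by linarith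
  finally have "f D \<le> f (Lim e - Lim e') + f (T (Suc l) e - Lim e) + f (T (Suc l) e' - Lim e')" .
  moreover have "f (T (Suc l) e - Lim e) \<le> 2 * f s ^ Suc l" by (rule Lim_prop)
  moreover have "f (T (Suc l) e' - Lim e') \<le> 2 * f s ^ Suc l" by (rule Lim_prop)
  moreover have "4 * f s ^ Suc l \<le> f s ^ l / 2"
    using ssmall sig_pos by (simp add: field_simps)
  ultimately show ?thesis using fD by linarith
qed

lemma Lim_inj: "e \<noteq> e' \<Longrightarrow> Lim e \<noteq> Lim e'"
proof -
  assume "e \<noteq> e'"
  then obtain i where "e i \<noteq> e' i" by blast
  define l where "l = (LEAST i. e i \<noteq> e' i)"
  have l: "e l \<noteq> e' l" using LeastI[of "\<lambda>i. e i \<noteq> e' i", OF \<open>e i \<noteq> e' i\<close>] by (simp add: l_def)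
  have "\<forall>j<l. e j = e' j" using not_less_Least l_def by blast
  from sep[OF this l] have "f (Lim e - Lim e') \<ge> f s ^ l / 2" .
  moreover have "f s ^ l / 2 > 0" using sig_pos by simp
  ultimately have "f (Lim e - Lim e') > 0" by linarith
  thus ?thesis by auto
qed

end


lemma lagrange_id:
  fixes Q :: "'a::field poly" and x :: "'b \<Rightarrow> 'a"
  assumes fin: "finite I" and inj: "inj_on x I" and lc: "lead_coeff Q = 1"
    and dg: "degree Q + 1 = card I"
  shows "(\<Sum>i\<in>I. poly Q (x i) / (\<Prod>j\<in>I-{i}. (x i - x j))) = 1"
proof -
  define n where "n = degree Q"
  define c where "c i = poly Q (x i) / (\<Prod>j\<in>I-{i}. (x i - x j))" for i
  define B where "B i = (\<Prod>j\<in>I-{i}. [:- x j, 1:])" for i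
  define Lp where "Lp = (\<Sum>i\<in>I. smult (c i) (B i))"
  have cardm: "card (I - {i}) = n" if "i \<in> I" for i
    using that fin dg by (simp add: n_def)
  have degB: "degree (B i) = n" if "i \<in> I" for i
  proof -
    have "degree (B i) = (\<Sum>j\<in>I-{i}. degree [:- x j, 1:])"
      unfolding B_def by (rule degree_prod_eq_sum_degree) auto
    also have "\<dots> = card (I - {i})" by simp
    finally show ?thesis using cardm[OF that] by simp
  qed
  have lcB: "lead_coeff (B i) = 1" for i
    unfolding B_def lead_coeff_prod by simp
  have coeffB: "coeff (B i) n = 1" if "i \<in> I" for i
    using lcB[of i] degB[OF that] by simp
  have coeffL: "coeff Lp n = (\<Sum>i\<in>I. c i)"
    unfolding Lp_def coeff_sum using coeffB by (simp cong: sum.cong)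
  have degL: "degree Lp \<le> n"
    unfolding Lp_def
    by (rule degree_sum_le[OF fin]) (use degB degree_smult_le order_trans in metis)
  have polyL: "poly Lp (x k) = poly Q (x k)" if k: "k \<in> I" for k
  proof -
    have z: "poly (B i) (x k) = 0" if "i \<in> I" "i \<noteq> k" for i
    proof -
      have "poly (B i) (x k) = (\<Prod>j\<in>I-{i}. x k - x j)" unfolding B_def poly_prod by simp
      also have "\<dots> = 0" using fin k that by (intro prod_zero) auto
      finally show ?thesis .
    qed
    have nz: "(\<Prod>j\<in>I-{k}. (x k - x j)) \<noteq> 0"
      using fin inj k by (subst prod_zero_iff) (auto simp: inj_on_def)
    have "poly Lp (x k) = (\<Sum>i\<in>I. c i * poly (B i) (x k))"
      unfolding Lp_def poly_sum by simp
    also have "\<dots> = c k * poly (B k) (x k)"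
      using fin k z by (subst sum.remove[of _ k]) auto
    also have "poly (B k) (x k) = (\<Prod>j\<in>I-{k}. (x k - x j))"
      unfolding B_def poly_prod by simp
    finally show ?thesis using nz by (simp add: c_def)
  qed
  have "Q = Lp"
  proof (rule poly_eqI_degree[of "x ` I"])
    show "poly Q z = poly Lp z" if "z \<in> x ` I" for z using that polyL by auto
    have "card (x ` I) = card I" using card_image[OF inj] .
    thus "degree Q < card (x ` I)" "degree Lp < card (x ` I)" using dg degL n_def by auto
  qed
  hence "coeff Q n = (\<Sum>i\<in>I. c i)" using coeffL by simp
  thus ?thesis using lc by (simp add: n_def c_def)
qed

context av
begin

lemma lagrange_ineq:
  fixes Q :: "'a poly" and x :: "'b \<Rightarrow> 'a"
  assumes fin: "finite I" and inj: "inj_on x I" and lc: "lead_coeff Q = 1"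
    and dg: "degree Q + 1 = card I"
  shows "1 \<le> (\<Sum>i\<in>I. f (poly Q (x i)) / (\<Prod>j\<in>I-{i}. f (x i - x j)))"
proof -
  have "1 = f (\<Sum>i\<in>I. poly Q (x i) / (\<Prod>j\<in>I-{i}. (x i - x j)))"
    using lagrange_id[OF assms] by simp
  also have "\<dots> \<le> (\<Sum>i\<in>I. f (poly Q (x i) / (\<Prod>j\<in>I-{i}. (x i - x j))))" by (rule fsum)
  also have "\<dots> = (\<Sum>i\<in>I. f (poly Q (x i)) / (\<Prod>j\<in>I-{i}. f (x i - x j)))"
    by (simp add: fprod)
  finally show ?thesis .
qed

end


definition pre :: "nat \<Rightarrow> (nat \<Rightarrow> bool) \<Rightarrow> nat set" where
  "pre m e = {i. i < m \<and> e i}"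

lemma pre_sub: "pre m ` S \<subseteq> Pow {..<m}"
  by (auto simp: pre_def)

lemma pre_fin[simp]: "finite (pre m ` S)"
  using finite_subset[OF pre_sub] by auto

lemma pre_card: "card (pre m ` S) \<le> 2 ^ m"
proof -
  have "card (pre m ` S) \<le> card (Pow {..<m::nat})" by (rule card_mono[OF _ pre_sub]) auto
  thus ?thesis by (simp add: card_Pow)
qed

lemma pre_restrict: "m \<le> M \<Longrightarrow> pre M e \<inter> {..<m} = pre m e"
  by (auto simp: pre_def)

lemma pre_eq_mono: "m \<le> M \<Longrightarrow> pre M e = pre M e' \<Longrightarrow> pre m e = pre m e'"
  by (metis pre_restrict)

lemma pre_of_set: "u \<subseteq> {..<M} \<Longrightarrow> pre M (\<lambda>i. i \<in> u) = u"
  by (auto simp: pre_def)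

lemma pre_mem: "i < m \<Longrightarrow> (i \<in> pre m e) = e i"
  by (auto simp: pre_def)

lemma pre_grow:
  assumes "m \<le> M"
  shows "card (pre M ` S) \<le> 2 ^ (M - m) * card (pre m ` S)"
proof -
  define g where "g u = (u \<inter> {..<m}, u \<inter> {m..<M})" for u :: "nat set"
  have inj: "inj_on g (pre M ` S)"
  proof (rule inj_onI)
    fix u v assume u: "u \<in> pre M ` S" and v: "v \<in> pre M ` S" and "g u = g v"
    hence a: "u \<inter> {..<m} = v \<inter> {..<m}" "u \<inter> {m..<M} = v \<inter> {m..<M}" by (auto simp: g_def)
    have "u \<subseteq> {..<M}" "v \<subseteq> {..<M}" using u v pre_sub by blast+
    hence "u = u \<inter> {..<m} \<union> u \<inter> {m..<M}" "v = v \<inter> {..<m} \<union> v \<inter> {m..<M}" by auto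
    with a show "u = v" by simp
  qed
  have sub: "g ` (pre M ` S) \<subseteq> (pre m ` S) \<times> Pow {m..<M}"
    using assms by (auto simp: g_def pre_restrict)
  have "card (pre M ` S) = card (g ` (pre M ` S))" using card_image[OF inj] by simp
  also have "\<dots> \<le> card ((pre m ` S) \<times> Pow {m..<M})"
    by (rule card_mono[OF _ sub]) auto
  also have "\<dots> = card (pre m ` S) * 2 ^ (M - m)" by (simp add: card_cartesian_product card_Pow)
  finally show ?thesis by (simp add: mult.commute)
qed

lemma pre_mono_set: "S \<subseteq> S' \<Longrightarrow> card (pre m ` S) \<le> card (pre m ` S')"
  by (intro card_mono) (auto)

lemma pre_fin_set: "finite F \<Longrightarrow> card (pre m ` F) \<le> card F"
  by (rule card_image_le)

lemma pre_un: "card (pre m ` (S \<union> S')) \<le> card (pre m ` S) + card (pre m ` S')"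
  by (simp add: image_Un card_Un_le)

definition agree :: "nat \<Rightarrow> nat set \<Rightarrow> nat set \<Rightarrow> bool" where
  "agree i u v \<longleftrightarrow> (\<forall>j\<le>i. j \<in> u \<longleftrightarrow> j \<in> v)"

lemma agree_card:
  assumes "i < m"
  shows "card {v \<in> Pow {..<m}. agree i w v} \<le> 2 ^ (m - Suc i)"
proof -
  define g where "g v = v \<inter> {i<..<m}" for v :: "nat set"
  have inj: "inj_on g {v \<in> Pow {..<m}. agree i w v}"
  proof (rule inj_onI)
    fix u v assume u: "u \<in> {v \<in> Pow {..<m}. agree i w v}" and v: "v \<in> {v \<in> Pow {..<m}. agree i w v}"
      and e: "g u = g v"
    show "u = v"
    proof (rule set_eqI)
      fix j
      show "j \<in> u \<longleftrightarrow> j \<in> v"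
      proof (cases "j \<le> i")
        case True thus ?thesis using u v by (auto simp: agree_def)
      next
        case False
        hence "j \<in> u \<longleftrightarrow> j \<in> g u" "j \<in> v \<longleftrightarrow> j \<in> g v" using u v by (auto simp: g_def)
        thus ?thesis using e by simp
      qed
    qed
  qed
  have "card {v \<in> Pow {..<m}. agree i w v} = card (g ` {v \<in> Pow {..<m}. agree i w v})"
    using card_image[OF inj] by simp
  also have "\<dots> \<le> card (Pow {i<..<m})" by (rule card_mono) (auto simp: g_def)
  also have "\<dots> = 2 ^ (m - Suc i)" by (simp add: card_Pow)
  finally show ?thesis .
qed

lemma sum_pow2: "(\<Sum>i<m. (2::nat) ^ (m - Suc i)) = 2 ^ m - 1"
proof (induction m)
  case (Suc m)
  have "(\<Sum>i<Suc m. (2::nat) ^ (Suc m - Suc i)) = 2 ^ m + (\<Sum>i<m. 2 ^ (m - Suc i))"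
    by (subst sum.lessThan_Suc_shift) simp
  also have "\<dots> = 2 ^ m + (2 ^ m - 1)" using Suc by simp
  also have "\<dots> = 2 ^ Suc m - 1" using one_le_power[of "2::nat" m] by simp
  finally show ?case .
qed simp

lemma pow2_between: "(a::nat) \<ge> 1 \<Longrightarrow> \<exists>m. a \<le> 2 ^ m \<and> 2 ^ m < 2 * a"
proof -
  assume a: "a \<ge> 1"
  define m where "m = (LEAST m. a \<le> 2 ^ m)"
  have "a < 2 ^ a" by (rule less_exp)
  hence ex: "\<exists>m. a \<le> 2 ^ m" by (blast intro: less_imp_le)
  have m1: "a \<le> 2 ^ m" unfolding m_def by (rule LeastI_ex[OF ex])
  have "2 ^ m < 2 * a"
  proof (cases m)
    case 0 thus ?thesis using a by simp
  next
    case (Suc k)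
    have "\<not> a \<le> 2 ^ k" using not_less_Least[of k "\<lambda>m. a \<le> 2 ^ m"] Suc m_def by simp
    thus ?thesis using Suc by simp
  qed
  thus ?thesis using m1 by blast
qed

lemma sq_le_pow2: "(d::nat) \<ge> 4 \<Longrightarrow> d * d \<le> 2 ^ d"
proof (induction d rule: dec_induct)
  case base then show ?case by simp
next
  case (step n)
  have "Suc n * Suc n = n * n + 2 * n + 1" by simp
  also have "\<dots> \<le> n * n + n * n" using step(1) mult_le_mono1[of 4 n n] by linarith
  also have "\<dots> \<le> 2 ^ Suc n" using step(3) by simp
  finally show ?case .
qed


lemma numeric:
  fixes L sg B :: real and M K d p :: nat
  assumes sg: "0 < sg" "sg \<le> 1" and L: "L \<ge> 4 * (4/sg)^16" and B: "B \<ge> 0"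
    and MK: "M = K + d + 1" and p: "p \<le> 16 * d" "M \<le> p" and dB: "16 * real d * B < 2^d"
  shows "real M * (B * (2*L)^K / ((L/2)^(M-1) * sg^p)) < 1"
proof -
  have r0: "4/sg > 0" using sg by simp
  have L2: "L/2 \<ge> 2 * (4/sg)^16" using L by simp
  have "(4/sg)^16 > 0" using r0 by simp
  hence Lpos: "L/2 > 0" using L2 by linarith
  have "2*L = 4*(L/2)" by simp
  hence e1: "(2*L)^K = 4^K * (L/2)^K" by (simp only: power_mult_distrib)
  have e2: "(L/2)^(M-1) = (L/2)^K * (L/2)^d" using MK by (simp add: power_add)
  have t: "B * (2*L)^K / ((L/2)^(M-1) * sg^p) = B * 4^K / ((L/2)^d * sg^p)"
  proof -
    have nz: "(L/2)^K \<noteq> 0" using Lpos by simp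
    have "B * (2*L)^K / ((L/2)^(M-1) * sg^p) = ((L/2)^K * (B * 4^K)) / ((L/2)^K * ((L/2)^d * sg^p))"
      unfolding e1 e2 by (simp only: ac_simps)
    also have "\<dots> = B * 4^K / ((L/2)^d * sg^p)" by (rule mult_divide_mult_cancel_left[OF nz])
    finally show ?thesis .
  qed
  have sp: "sg^p \<ge> sg^(16*d)" using sg p by (intro power_decreasing) auto
  have Ld: "(L/2)^d \<ge> (2 * (4/sg)^16)^d" using L2 r0 by (intro power_mono) auto
  have q1: "(2 * (4/sg)^16)^d = 2^d * (4/sg)^(16*d)"
    by (simp add: power_mult_distrib power_mult)
  have q2: "(4/sg)^(16*d) * sg^(16*d) = 4^(16*d)"
    using sg by (subst power_mult_distrib[symmetric]) simp
  have eqA: "(2 * (4/sg)^16)^d * sg^(16*d) = 2^d * 4^(16*d)"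
    by (simp only: q1 mult.assoc q2)
  have ineq: "(L/2)^d * sg^p \<ge> (2 * (4/sg)^16)^d * sg^(16*d)"
    by (rule mult_mono[OF Ld sp]) (use Lpos sg in auto)
  have den: "(L/2)^d * sg^p \<ge> 2^d * 4^(16*d)" using ineq unfolding eqA .
  have K16: "K \<le> 16 * d" using MK p by simp
  have M16: "real M \<le> 16 * real d" using p by linarith
  have "real M * (B * 4^K) \<le> (16 * real d) * (B * 4^(16*d))"
    using M16 B K16 by (intro mult_mono mult_left_mono power_increasing) auto
  also have "\<dots> < 2^d * 4^(16*d)" using dB by simp
  finally have num: "real M * (B * 4^K) < 2^d * 4^(16*d)" .
  have dpos: "(L/2)^d * sg^p > 0" using Lpos sg by simp
  have "real M * (B * 4^K / ((L/2)^d * sg^p)) = real M * (B * 4^K) / ((L/2)^d * sg^p)" by simp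
  also have "\<dots> < 1" using num den dpos by (simp add: divide_less_eq)
  finally show ?thesis using t by simp
qed


context cantor
begin

lemma pair_bound:
  assumes W: "W \<subseteq> Pow {..<m}" and ep: "\<forall>w\<in>W. pre m (ep w) = w"
    and w: "w \<in> W" and v: "v \<in> W" and vw: "v \<noteq> w"
  shows "f (lam * Lim (ep w) - lam * Lim (ep v)) \<ge> f lam / 2 * f s ^ card {i \<in> {..<m}. agree i w v}"
proof -
  have pw: "pre m (ep w) = w" and pv: "pre m (ep v) = v" using ep w v by auto
  have "\<exists>i<m. ep w i \<noteq> ep v i"
  proof (rule ccontr)
    assume "\<not> ?thesis"
    hence "pre m (ep w) = pre m (ep v)" by (auto simp: pre_def)
    thus False using pw pv vw by simp
  qed
  then obtain i0 where i0: "i0 < m" "ep w i0 \<noteq> ep v i0" by blast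
  define l where "l = (LEAST i. ep w i \<noteq> ep v i)"
  have l: "ep w l \<noteq> ep v l" using LeastI[of "\<lambda>i. ep w i \<noteq> ep v i", OF i0(2)] by (simp add: l_def)
  have lle: "l \<le> i0" using Least_le[of "\<lambda>i. ep w i \<noteq> ep v i", OF i0(2)] by (simp add: l_def)
  have below: "\<forall>j<l. ep w j = ep v j" using not_less_Least l_def by blast
  have set_eq: "{i \<in> {..<m}. agree i w v} = {..<l}"
  proof (rule set_eqI, rule iffI)
    fix i assume "i \<in> {i \<in> {..<m}. agree i w v}"
    hence im: "i < m" and ag: "\<forall>j\<le>i. j \<in> w \<longleftrightarrow> j \<in> v" by (auto simp: agree_def)
    show "i \<in> {..<l}"
    proof (rule ccontr)
      assume "i \<notin> {..<l}"
      hence "l \<le> i" by simp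
      hence "l \<in> w \<longleftrightarrow> l \<in> v" using ag by blast
      moreover have "l < m" using \<open>l \<le> i\<close> im by simp
      ultimately have "ep w l = ep v l" using pw pv pre_mem[of l m] by metis
      thus False using l by simp
    qed
  next
    fix i assume "i \<in> {..<l}"
    hence il: "i < l" by simp
    hence im: "i < m" using lle i0 by simp
    have "\<forall>j\<le>i. j \<in> w \<longleftrightarrow> j \<in> v"
    proof (intro allI impI)
      fix j assume "j \<le> i"
      hence "j < l" "j < m" using il im by auto
      thus "j \<in> w \<longleftrightarrow> j \<in> v" using below pw pv pre_mem[of j m] by metis
    qed
    thus "i \<in> {i \<in> {..<m}. agree i w v}" using im by (simp add: agree_def)
  qed
  have "f (lam * Lim (ep w) - lam * Lim (ep v)) = f lam * f (Lim (ep w) - Lim (ep v))"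
    by (simp add: right_diff_distrib[symmetric])
  also have "\<dots> \<ge> f lam * (f s ^ l / 2)" using sep[OF below l] by (intro mult_left_mono) auto
  finally show ?thesis using set_eq by simp
qed

lemma prod_bound:
  assumes fin: "finite W" and W: "W \<subseteq> Pow {..<m}" and ep: "\<forall>w\<in>W. pre m (ep w) = w"
    and w: "w \<in> W"
  shows "(\<Prod>v\<in>W-{w}. f (lam * Lim (ep w) - lam * Lim (ep v))) \<ge> (f lam / 2) ^ (card W - 1) * f s ^ (2 ^ m)"
proof -
  define ll where "ll v = card {i \<in> {..<m}. agree i w v}" for v
  have "(\<Prod>v\<in>W-{w}. f lam / 2 * f s ^ ll v) \<le> (\<Prod>v\<in>W-{w}. f (lam * Lim (ep w) - lam * Lim (ep v)))"
    by (rule prod_mono) (use pair_bound[OF W ep w] sig_pos in \<open>auto simp: ll_def\<close>)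
  moreover have "(\<Prod>v\<in>W-{w}. f lam / 2 * f s ^ ll v) = (f lam / 2) ^ (card W - 1) * f s ^ (\<Sum>v\<in>W-{w}. ll v)"
  proof -
    have "(\<Prod>v\<in>W-{w}. f lam / 2 * f s ^ ll v) = (\<Prod>v\<in>W-{w}. f lam / 2) * (\<Prod>v\<in>W-{w}. f s ^ ll v)"
      by (rule prod.distrib)
    also have "\<dots> = (f lam / 2) ^ card (W-{w}) * f s ^ (\<Sum>v\<in>W-{w}. ll v)"
      by (simp only: prod_constant power_sum)
    finally show ?thesis using fin w by (simp add: card_Diff_singleton)
  qed
  moreover have "(\<Sum>v\<in>W-{w}. ll v) \<le> 2 ^ m"
  proof -
    have "(\<Sum>v\<in>W-{w}. ll v) = (\<Sum>v\<in>W-{w}. \<Sum>i<m. if agree i w v then 1 else 0)"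
      unfolding ll_def by (intro sum.cong refl) (simp add: sum.If_cases Int_def conj_commute)
    also have "\<dots> = (\<Sum>i<m. \<Sum>v\<in>W-{w}. if agree i w v then 1 else 0)" by (rule sum.swap)
    also have "\<dots> = (\<Sum>i<m. card {v \<in> W-{w}. agree i w v})"
      using fin by (intro sum.cong refl) (simp add: sum.If_cases Int_def conj_commute conj_left_commute)
    also have "\<dots> \<le> (\<Sum>i<m. 2 ^ (m - Suc i))"
    proof (rule sum_mono)
      fix i assume "i \<in> {..<m}"
      hence "card {v \<in> W-{w}. agree i w v} \<le> card {v \<in> Pow {..<m}. agree i w v}"
        using W by (intro card_mono) auto
      also have "\<dots> \<le> 2 ^ (m - Suc i)" using agree_card \<open>i \<in> {..<m}\<close> by simp
      finally show "card {v \<in> W-{w}. agree i w v} \<le> 2 ^ (m - Suc i)" .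
    qed
    also have "\<dots> \<le> 2 ^ m" using sum_pow2 by simp
    finally show ?thesis .
  qed
  hence "f s ^ (\<Sum>v\<in>W-{w}. ll v) \<ge> f s ^ (2 ^ m)"
    using sig_pos ssmall by (intro power_decreasing) auto
  ultimately show ?thesis using sig_pos
    by (smt (verit, ccfv_SIG) divide_nonneg_nonneg mult_left_mono nonneg zero_le_power)
qed


lemma main_est:
  assumes mon: "\<forall>n. lead_coeff (P n) = 1"
    and deg: "filterlim (\<lambda>n. degree (P n)) at_top sequentially"
    and lam: "f lam \<ge> 4 * (4 / f s)^16"
  shows "\<exists>m. 4 * card (pre m ` {e. \<forall>n. f (poly (P n) (lam * Lim e)) \<le> B}) < 2^m"
proof (rule ccontr)
  define A where "A = {e. \<forall>n. f (poly (P n) (lam * Lim e)) \<le> B}"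
  assume "\<not> (\<exists>m. 4 * card (pre m ` {e. \<forall>n. f (poly (P n) (lam * Lim e)) \<le> B}) < 2^m)"
  hence H: "\<And>m. 2^m \<le> 4 * card (pre m ` A)" unfolding A_def by (auto simp: not_less)
  have "card (pre 0 ` A) > 0" using H[of 0] by simp
  hence "A \<noteq> {}" by auto
  then obtain e0 where "e0 \<in> A" by blast
  hence B0: "B \<ge> 0" unfolding A_def using nonneg order_trans by blast
  have "(4/f s)^16 > 0" using sig_pos s0 by simp
  hence lampos: "f lam > 0" using lam by linarith
  hence lam0: "lam \<noteq> 0" by auto
  define d0 where "d0 = max 4 (nat \<lceil>16 * B\<rceil> + 1)"
  have "\<forall>\<^sub>F n in sequentially. d0 \<le> degree (P n)"
    using deg unfolding filterlim_at_top by blast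
  then obtain n where dn: "d0 \<le> degree (P n)" unfolding eventually_sequentially by blast
  define d where "d = degree (P n)"
  have d4: "d \<ge> 4" using dn by (simp add: d_def d0_def)
  have "real d > 16 * B" using dn by (simp add: d_def d0_def) linarith
  hence a: "real d * (16 * B) < real d * real d" using d4 by (intro mult_strict_left_mono) auto
  have "d * d \<le> 2 ^ d" using sq_le_pow2[OF d4] .
  hence "real (d * d) \<le> real (2 ^ d)" by (simp only: of_nat_le_iff)
  hence b: "real d * real d \<le> 2 ^ d" by simp
  have "16 * real d * B < 2 ^ d" using a b by (simp add: algebra_simps)
  hence dB: "16 * real d * B < 2 ^ d" .
  obtain m where m1: "4 * (d + 1) \<le> 2 ^ m" and m2: "2 ^ m < 2 * (4 * (d + 1))"
    using pow2_between[of "4 * (d + 1)"] by auto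
  define W where "W = pre m ` A"
  define M where "M = card W"
  have Md: "d + 1 \<le> M" using H[of m] m1 by (simp add: M_def W_def)
  have M2: "M \<le> 2 ^ m" using pre_card by (simp add: M_def W_def)
  have finW: "finite W" by (simp add: W_def)
  have Wsub: "W \<subseteq> Pow {..<m}" using pre_sub by (simp add: W_def)
  define ep where "ep w = (SOME e. e \<in> A \<and> pre m e = w)" for w
  have ep: "ep w \<in> A \<and> pre m (ep w) = w" if "w \<in> W" for w
  proof -
    have "\<exists>e. e \<in> A \<and> pre m e = w" using that by (auto simp: W_def)
    thus ?thesis unfolding ep_def by (rule someI_ex)
  qed
  define xx where "xx w = lam * Lim (ep w)" for w
  have inj: "inj_on xx W"
  proof (rule inj_onI)
    fix u v assume u: "u \<in> W" and v: "v \<in> W" and e: "xx u = xx v"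
    hence "Lim (ep u) = Lim (ep v)" using lam0 by (simp add: xx_def)
    hence "ep u = ep v" using Lim_inj by blast
    thus "u = v" using ep[OF u] ep[OF v] by metis
  qed
  define K where "K = M - 1 - d"
  define Q where "Q = P n * monom 1 K"
  have Pn0: "P n \<noteq> 0" using mon by (metis one_neq_zero leading_coeff_0_iff)
  have lcQ: "lead_coeff Q = 1" unfolding Q_def lead_coeff_mult using mon by (simp add: degree_monom_eq)
  have dQ: "degree Q + 1 = card W"
    using Pn0 Md by (simp add: Q_def degree_mult_eq degree_monom_eq d_def K_def M_def)
  have L1: "1 \<le> (\<Sum>w\<in>W. f (poly Q (xx w)) / (\<Prod>v\<in>W-{w}. f (xx w - xx v)))"
    by (rule lagrange_ineq[OF finW inj lcQ dQ])
  define tau where "tau = B * (2 * f lam)^K / ((f lam / 2)^(M-1) * f s^(2^m))"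
  have tb: "f (poly Q (xx w)) / (\<Prod>v\<in>W-{w}. f (xx w - xx v)) \<le> tau" if w: "w \<in> W" for w
  proof -
    have xb: "f (xx w) \<le> 2 * f lam" using Lim_bound[of "ep w"] lampos
      by (simp add: xx_def mult.commute mult_left_mono)
    have "f (poly Q (xx w)) = f (poly (P n) (xx w)) * f (xx w) ^ K"
      by (simp add: Q_def poly_monom)
    also have "\<dots> \<le> B * (2 * f lam) ^ K"
      using ep[OF w] xb B0 by (intro mult_mono power_mono) (auto simp: A_def xx_def)
    finally have num: "f (poly Q (xx w)) \<le> B * (2 * f lam) ^ K" .
    have den: "(\<Prod>v\<in>W-{w}. f (xx w - xx v)) \<ge> (f lam / 2) ^ (M - 1) * f s ^ (2 ^ m)"
      using prod_bound[OF finW Wsub _ w, of ep lam] ep by (simp add: xx_def M_def)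
    have dpos: "(f lam / 2) ^ (M - 1) * f s ^ (2 ^ m) > 0" using lampos sig_pos by simp
    show ?thesis unfolding tau_def
      by (rule frac_le) (use num den dpos B0 lampos in auto)
  qed
  have "(\<Sum>w\<in>W. f (poly Q (xx w)) / (\<Prod>v\<in>W-{w}. f (xx w - xx v))) \<le> real M * tau"
    using sum_bounded_above[of W _ tau] tb by (simp add: M_def)
  moreover have "real M * tau < 1" unfolding tau_def
  proof (rule numeric)
    show "0 < f s" "f s \<le> 1" using sig_pos ssmall by auto
    show "f lam \<ge> 4 * (4 / f s)^16" by (rule lam)
    show "B \<ge> 0" by (rule B0)
    show "M = K + d + 1" using Md by (simp add: K_def)
    show "2 ^ m \<le> 16 * d" using m2 d4 by simp
    show "M \<le> 2 ^ m" by (rule M2)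
    show "16 * real d * B < 2 ^ d" by (rule dB)
  qed
  ultimately show False using L1 by linarith
qed

end


primrec SF :: "'a::field set \<Rightarrow> nat \<Rightarrow> 'a set" where
  "SF X 0 = X \<union> {0, 1}"
| "SF X (Suc n) = SF X n \<union> (\<lambda>(a, b). a + b) ` (SF X n \<times> SF X n) \<union> (\<lambda>(a, b). a * b) ` (SF X n \<times> SF X n)
      \<union> uminus ` SF X n \<union> inverse ` SF X n"

lemma SF_count: "countable X \<Longrightarrow> countable (SF X n)"
  by (induction n) auto

lemma SF_mono: "m \<le> n \<Longrightarrow> SF X m \<subseteq> SF X n"
  by (induction n rule: dec_induct) auto

lemma SF_subfield: "is_subfield (\<Union>n. SF X n)"
  unfolding is_subfield_def
proof (intro conjI ballI)
  have "0 \<in> SF X 0" "1 \<in> SF X 0" by auto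
  thus "0 \<in> (\<Union>n. SF X n)" "1 \<in> (\<Union>n. SF X n)" by blast+
next
  fix x y assume x: "x \<in> (\<Union>n. SF X n)" and y: "y \<in> (\<Union>n. SF X n)"
  then obtain i j where i: "x \<in> SF X i" and j: "y \<in> SF X j" by blast
  hence "x \<in> SF X (max i j)" "y \<in> SF X (max i j)" using SF_mono[of i "max i j"] SF_mono[of j "max i j"] by auto
  hence "x + y \<in> SF X (Suc (max i j))" "x * y \<in> SF X (Suc (max i j))" by auto
  thus "x + y \<in> (\<Union>n. SF X n)" "x * y \<in> (\<Union>n. SF X n)" by blast+
next
  fix x assume x: "x \<in> (\<Union>n. SF X n)"
  then obtain i where i: "x \<in> SF X i" by blast
  hence "- x \<in> SF X (Suc i)" "inverse x \<in> SF X (Suc i)" by auto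
  thus "- x \<in> (\<Union>n. SF X n)" "inverse x \<in> (\<Union>n. SF X n)" by blast+
qed

lemma gen_subfield_countable:
  assumes "countable X"
  shows "countable (gen_subfield X)"
proof -
  have "gen_subfield X \<subseteq> (\<Union>n. SF X n)"
    unfolding gen_subfield_def
    by (rule Inter_lower) (use SF_subfield in \<open>auto intro: UN_I[of 0]\<close>)
  moreover have "countable (\<Union>n. SF X n)" using SF_count[OF assms] by auto
  ultimately show ?thesis by (rule countable_subset)
qed

definition Alg :: "'a::field set \<Rightarrow> 'a set" where
  "Alg K = {x. \<exists>p. p \<noteq> 0 \<and> (\<forall>i. coeff p i \<in> K) \<and> poly p x = 0}"

lemma Alg_countable:
  assumes "countable K"
  shows "countable (Alg K)"
proof -
  have "Alg K \<subseteq> (\<Union>p\<in>Poly ` lists K. {x. p \<noteq> 0 \<and> poly p x = 0})"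
  proof
    fix x assume "x \<in> Alg K"
    then obtain p where p: "p \<noteq> 0" "\<forall>i. coeff p i \<in> K" "poly p x = 0" by (auto simp: Alg_def)
    have "set (coeffs p) \<subseteq> K" using p(2) by (auto simp: coeffs_def)
    hence "coeffs p \<in> lists K" by auto
    hence "p \<in> Poly ` lists K" by (metis Poly_coeffs image_eqI)
    thus "x \<in> (\<Union>p\<in>Poly ` lists K. {x. p \<noteq> 0 \<and> poly p x = 0})" using p by blast
  qed
  moreover have "countable (\<Union>p\<in>Poly ` lists K. {x. p \<noteq> 0 \<and> poly p x = 0})"
  proof (rule countable_UN)
    show "countable (Poly ` lists K)" using assms by auto
    fix p :: "'a poly"
    show "countable {x. p \<noteq> 0 \<and> poly p x = 0}"
    proof (cases "p = 0")
      case False thus ?thesis using poly_roots_finite[OF False] by (auto intro: countable_finite)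
    qed simp
  qed
  ultimately show ?thesis by (rule countable_subset)
qed


lemma pre_Suc: "pre (Suc k) e = pre k e \<union> (if e k then {k} else {})"
  by (auto simp: pre_def less_Suc_eq)

lemma koenig:
  fixes U :: "nat \<Rightarrow> (nat \<Rightarrow> bool) set" and mm :: "nat \<Rightarrow> nat"
  assumes dep: "\<And>j e e'. pre (mm j) e = pre (mm j) e' \<Longrightarrow> e \<in> U j \<Longrightarrow> e' \<in> U j"
    and fip: "\<And>J. \<exists>e. \<forall>j\<le>J. e \<notin> U j"
  shows "\<exists>e. \<forall>j. e \<notin> U j"
proof -
  define good where "good k u \<longleftrightarrow> (\<forall>J. \<exists>e. pre k e = u \<and> (\<forall>j\<le>J. e \<notin> U j))" for k u
  define path where "path = rec_nat {} (\<lambda>k p. if good (Suc k) p then p else insert k p)"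
  have p0: "path 0 = {}" by (simp add: path_def)
  have pS: "path (Suc k) = (if good (Suc k) (path k) then path k else insert k (path k))" for k
    by (simp add: path_def)
  have psub: "path k \<subseteq> {..<k}" for k
    by (induction k) (auto simp: p0 pS)
  have gp: "good k (path k)" for k
  proof (induction k)
    case 0
    have "pre 0 e = {}" for e by (simp add: pre_def)
    thus ?case using fip by (simp add: good_def p0)
  next
    case (Suc k)
    show ?case
    proof (cases "good (Suc k) (path k)")
      case True thus ?thesis by (simp add: pS)
    next
      case False
      have "good (Suc k) (insert k (path k))"
      proof (rule ccontr)
        assume "\<not> good (Suc k) (insert k (path k))"
        then obtain J2 where J2: "\<And>e. pre (Suc k) e = insert k (path k) \<Longrightarrow> \<exists>j\<le>J2. e \<in> U j"
          unfolding good_def by blast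
        from False obtain J1 where J1: "\<And>e. pre (Suc k) e = path k \<Longrightarrow> \<exists>j\<le>J1. e \<in> U j"
          unfolding good_def by blast
        from Suc obtain e where e: "pre k e = path k" "\<forall>j\<le>max J1 J2. e \<notin> U j"
          unfolding good_def by blast
        show False
        proof (cases "e k")
          case True
          hence "pre (Suc k) e = insert k (path k)" using e(1) by (simp add: pre_Suc)
          then obtain j where "j \<le> J2" "e \<in> U j" using J2 by blast
          thus False using e(2) by auto
        next
          case False
          hence "pre (Suc k) e = path k" using e(1) by (simp add: pre_Suc)
          then obtain j where "j \<le> J1" "e \<in> U j" using J1 by blast
          thus False using e(2) by auto
        qed
      qed
      thus ?thesis using False by (simp add: pS)
    qed
  qed
  define es where "es i = (i \<in> path (Suc i))" for i
  have pes: "pre k es = path k" for k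
  proof (induction k)
    case 0 thus ?case by (simp add: pre_def p0)
  next
    case (Suc k)
    have "k \<notin> path k" using psub[of k] by auto
    thus ?case using Suc by (auto simp: pre_Suc es_def pS)
  qed
  have "es \<notin> U j" for j
  proof
    assume "es \<in> U j"
    obtain e where e: "pre (mm j) e = path (mm j)" "\<forall>i\<le>j. e \<notin> U i"
      using gp[of "mm j"] unfolding good_def by blast
    have "pre (mm j) es = pre (mm j) e" using e(1) pes by simp
    hence "e \<in> U j" using dep \<open>es \<in> U j\<close> by blast
    thus False using e(2) by simp
  qed
  thus ?thesis by blast
qed


lemma geo8: "(\<Sum>j<J. 1 / 2 ^ (j + 3) :: real) \<le> 1/4"
proof -
  have "(\<Sum>j<J. 1 / 2 ^ (j + 3) :: real) = (\<Sum>j<J. (1/2) ^ j) / 8"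
    by (simp add: sum_divide_distrib power_add power_one_over)
  also have "(\<Sum>j<J. (1/2::real) ^ j) = (1 - (1/2) ^ J) / (1/2)" by (simp add: sum_gp_strict)
  also have "\<dots> \<le> 2" by simp
  finally show ?thesis by simp
qed

lemma fip_lemma:
  fixes A :: "nat \<Rightarrow> (nat \<Rightarrow> bool) set" and mm :: "nat \<Rightarrow> nat"
  assumes mono: "\<And>j j'. j \<le> j' \<Longrightarrow> A j \<subseteq> A j'"
    and h1: "\<And>j. 2 * card (pre (mm j) ` A j) < 2 ^ (mm j)"
    and h2: "\<And>j M. M \<ge> mm j \<Longrightarrow> real (card (pre (mm j) ` A j)) / 2 ^ (mm j)
                 - real (card (pre M ` A j)) / 2 ^ M \<le> 1 / 2 ^ (j + 3)"
  shows "\<exists>e. \<forall>j\<le>J. pre (mm j) e \<notin> pre (mm j) ` A j"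
proof -
  define U where "U j = {e. pre (mm j) e \<in> pre (mm j) ` A j}" for j
  define MM where "MM = Max (mm ` {..J})"
  have mmle: "mm j \<le> MM" if "j \<le> J" for j using that by (simp add: MM_def)
  have AU: "A j \<subseteq> U j" for j by (auto simp: U_def)
  have preU: "pre (mm j) ` U j = pre (mm j) ` A j" for j by (auto simp: U_def)
  have cU: "real (card (pre MM ` U j)) \<le> 2 ^ MM * (real (card (pre (mm j) ` A j)) / 2 ^ (mm j))"
    if "j \<le> J" for j
  proof -
    have "card (pre MM ` U j) \<le> 2 ^ (MM - mm j) * card (pre (mm j) ` U j)"
      by (rule pre_grow[OF mmle[OF that]])
    hence "real (card (pre MM ` U j)) \<le> real (2 ^ (MM - mm j) * card (pre (mm j) ` A j))"
      unfolding preU by (simp only: of_nat_le_iff)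
    also have "\<dots> = (2::real) ^ (MM - mm j) * real (card (pre (mm j) ` A j))"
      by (simp only: of_nat_mult of_nat_power) simp
    also have "(2::real) ^ (MM - mm j) = 2 ^ MM / 2 ^ mm j"
      using mmle[OF that] by (rule power_diff[rotated]) simp
    finally show ?thesis by simp
  qed
  have cD: "real (card (pre MM ` U j - pre MM ` A j)) \<le> 2 ^ MM / 2 ^ (j + 3)" if "j \<le> J" for j
  proof -
    have sub: "pre MM ` A j \<subseteq> pre MM ` U j" using AU by auto
    have "card (pre MM ` U j - pre MM ` A j) = card (pre MM ` U j) - card (pre MM ` A j)"
      by (rule card_Diff_subset[OF _ sub]) simp
    hence "real (card (pre MM ` U j - pre MM ` A j)) = real (card (pre MM ` U j)) - real (card (pre MM ` A j))"
      using card_mono[OF _ sub] by simp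
    also have "\<dots> \<le> 2 ^ MM * (real (card (pre (mm j) ` A j)) / 2 ^ (mm j)) - 2 ^ MM * (real (card (pre MM ` A j)) / 2 ^ MM)"
      using cU[OF that] by simp
    also have "\<dots> = 2 ^ MM * (real (card (pre (mm j) ` A j)) / 2 ^ (mm j) - real (card (pre MM ` A j)) / 2 ^ MM)"
      by (simp add: algebra_simps)
    also have "\<dots> \<le> 2 ^ MM * (1 / 2 ^ (j + 3))"
      using h2[OF mmle[OF that]] by (intro mult_left_mono) auto
    finally show ?thesis by simp
  qed
  define S where "S = (\<Union>j\<le>J. pre MM ` U j)"
  have Ssub: "S \<subseteq> pre MM ` U J \<union> (\<Union>j<J. pre MM ` U j - pre MM ` A j)"
  proof
    fix u assume "u \<in> S"
    then obtain j where j: "j \<le> J" "u \<in> pre MM ` U j" by (auto simp: S_def)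
    show "u \<in> pre MM ` U J \<union> (\<Union>j<J. pre MM ` U j - pre MM ` A j)"
    proof (cases "u \<in> pre MM ` A j")
      case True
      hence "u \<in> pre MM ` U J" using mono[OF j(1)] AU[of J] by blast
      thus ?thesis by blast
    next
      case False
      show ?thesis
      proof (cases "j = J")
        case True thus ?thesis using j by blast
      next
        case False
        hence "j < J" using j by simp
        thus ?thesis using j \<open>u \<notin> pre MM ` A j\<close> by blast
      qed
    qed
  qed
  have n1: "card S \<le> card (pre MM ` U J) + card (\<Union>j<J. pre MM ` U j - pre MM ` A j)"
    by (rule order_trans[OF card_mono[OF _ Ssub] card_Un_le]) auto
  have n2: "card (\<Union>j<J. pre MM ` U j - pre MM ` A j) \<le> (\<Sum>j<J. card (pre MM ` U j - pre MM ` A j))"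
    by (rule card_UN_le) simp
  have "card S \<le> card (pre MM ` U J) + (\<Sum>j<J. card (pre MM ` U j - pre MM ` A j))"
    using n1 n2 by linarith
  hence "real (card S) \<le> real (card (pre MM ` U J) + (\<Sum>j<J. card (pre MM ` U j - pre MM ` A j)))"
    by (simp only: of_nat_le_iff)
  hence cS: "real (card S) \<le> real (card (pre MM ` U J)) + (\<Sum>j<J. real (card (pre MM ` U j - pre MM ` A j)))"
    by (simp add: of_nat_sum)
  have "real (card (pre MM ` U J)) \<le> 2 ^ MM * (real (card (pre (mm J) ` A J)) / 2 ^ (mm J))"
    using cU by simp
  also have "\<dots> < 2 ^ MM * (1/2)"
  proof -
    have "real (2 * card (pre (mm J) ` A J)) < real (2 ^ (mm J))" using h1[of J] by (simp only: of_nat_less_iff)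
    hence "real (card (pre (mm J) ` A J)) / 2 ^ (mm J) < 1/2" by (simp add: field_simps)
    thus ?thesis by (intro mult_strict_left_mono) simp_all
  qed
  finally have c1: "real (card (pre MM ` U J)) < 2 ^ MM / 2" by simp
  have "(\<Sum>j<J. real (card (pre MM ` U j - pre MM ` A j))) \<le> (\<Sum>j<J. 2 ^ MM / 2 ^ (j + 3))"
    by (rule sum_mono) (use cD in auto)
  also have "\<dots> = 2 ^ MM * (\<Sum>j<J. 1 / 2 ^ (j + 3))" by (simp add: sum_distrib_left)
  also have "\<dots> \<le> 2 ^ MM * (1/4)" using geo8[of J] by (intro mult_left_mono) auto
  finally have c2: "(\<Sum>j<J. real (card (pre MM ` U j - pre MM ` A j))) \<le> 2 ^ MM / 4" by simp
  have "real (card S) < (2::real) ^ MM" using cS c1 c2 by linarith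
  hence "real (card S) < real ((2::nat) ^ MM)" by simp
  hence "card S < 2 ^ MM" by (simp only: of_nat_less_iff)
  hence lt: "card S < card (Pow {..<MM})" by (simp add: card_Pow)
  have "\<not> Pow {..<MM} \<subseteq> S"
  proof
    assume "Pow {..<MM} \<subseteq> S"
    hence "card (Pow {..<MM}) \<le> card S" by (intro card_mono) (auto simp: S_def)
    thus False using lt by simp
  qed
  then obtain u where u: "u \<subseteq> {..<MM}" "u \<notin> S" by blast
  define e where "e = (\<lambda>i. i \<in> u)"
  have pe: "pre MM e = u" unfolding e_def by (rule pre_of_set[OF u(1)])
  have "pre (mm j) e \<notin> pre (mm j) ` A j" if "j \<le> J" for j
  proof
    assume "pre (mm j) e \<in> pre (mm j) ` A j"
    hence "e \<in> U j" by (simp add: U_def)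
    hence "u \<in> S" using pe that by (auto simp: S_def)
    thus False using u by simp
  qed
  thus ?thesis by blast
qed

context cantor
begin

lemma density_seq:
  fixes S :: "(nat \<Rightarrow> bool) set" and eta :: real
  assumes ex: "\<exists>m. 2 * card (pre m ` S) < 2 ^ m" and eta: "eta > 0"
  shows "\<exists>m0. 2 * card (pre m0 ` S) < 2 ^ m0 \<and>
     (\<forall>M\<ge>m0. card (pre m0 ` S) / 2 ^ m0 - card (pre M ` S) / 2 ^ M \<le> (eta::real))"
proof -
  define dd where "dd m = real (card (pre m ` S)) / 2 ^ m" for m
  have dstep: "dd (Suc m) \<le> dd m" for m
  proof -
    have "card (pre (Suc m) ` S) \<le> 2 ^ (Suc m - m) * card (pre m ` S)" by (rule pre_grow) simp
    hence "card (pre (Suc m) ` S) \<le> 2 * card (pre m ` S)" by simp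
    hence "real (card (pre (Suc m) ` S)) \<le> real (2 * card (pre m ` S))" by (simp only: of_nat_le_iff)
    hence "real (card (pre (Suc m) ` S)) \<le> 2 * real (card (pre m ` S))" by simp
    thus ?thesis by (simp add: dd_def field_simps)
  qed
  have dec: "decseq dd" using dstep by (simp add: decseq_SucI)
  have "\<forall>i. 0 \<le> dd i" by (simp add: dd_def)
  then obtain L where L: "dd \<longlonglongrightarrow> L" "\<forall>i. L \<le> dd i" using decseq_convergent[OF dec] by blast
  have "\<forall>\<^sub>F n in sequentially. dd n < L + eta" using order_tendstoD(2)[OF L(1)] eta by simp
  then obtain N where N: "\<And>n. n \<ge> N \<Longrightarrow> dd n < L + eta" unfolding eventually_sequentially by blast
  obtain ma where ma: "2 * card (pre ma ` S) < 2 ^ ma" using ex by blast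
  define m0 where "m0 = max ma N"
  have "dd m0 \<le> dd ma" using dec unfolding decseq_def m0_def by simp
  moreover have "dd ma < 1/2"
  proof -
    have "real (2 * card (pre ma ` S)) < real (2 ^ ma)" using ma by (simp only: of_nat_less_iff)
    thus ?thesis by (simp add: dd_def field_simps)
  qed
  ultimately have "dd m0 < 1/2" by simp
  hence a: "2 * card (pre m0 ` S) < 2 ^ m0"
  proof -
    assume "dd m0 < 1/2"
    hence "real (2 * card (pre m0 ` S)) < real (2 ^ m0)" by (simp add: dd_def field_simps)
    thus ?thesis by (simp only: of_nat_less_iff)
  qed
  have b: "dd m0 - dd M \<le> eta" if "M \<ge> m0" for M
    using N[of m0] L(2) by (simp add: m0_def) (smt (verit) L(2))
  show ?thesis using a b unfolding dd_def by blast
qed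


lemma final:
  assumes mon: "\<forall>n. lead_coeff (P n) = 1"
    and deg: "filterlim (\<lambda>n. degree (P n)) at_top sequentially"
    and lam: "f lam \<ge> 4 * (4 / f s)^16"
    and cK: "countable Kset"
  shows "\<exists>\<xi>. transcendental_over Kset \<xi> \<and> \<not> (\<exists>B. \<forall>n. f (poly (P n) \<xi>) \<le> B)"
proof -
  have "(4/f s)^16 > 0" using sig_pos s0 by simp
  hence "f lam > 0" using lam by linarith
  hence lam0: "lam \<noteq> 0" by auto
  define al where "al = from_nat_into (insert 0 (Alg Kset))"
  have ral: "range al = insert 0 (Alg Kset)"
    unfolding al_def using Alg_countable[OF cK] by (intro range_from_nat_into) auto
  define Xp where "Xp e = lam * Lim e" for e
  have injX: "inj Xp"
  proof (rule injI)
    fix x y assume "Xp x = Xp y"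
    hence "Lim x = Lim y" using lam0 by (simp add: Xp_def)
    thus "x = y" using Lim_inj by blast
  qed
  define A0 where "A0 j = {e. \<forall>n. f (poly (P n) (lam * Lim e)) \<le> real j}" for j :: nat
  define Fj where "Fj j = {e. Xp e \<in> al ` {..j}}" for j :: nat
  define A where "A j = A0 j \<union> Fj j" for j
  have monoA: "A j \<subseteq> A j'" if "j \<le> j'" for j j'
  proof -
    have "A0 j \<subseteq> A0 j'" using that by (auto simp: A0_def intro: order_trans)
    moreover have "Fj j \<subseteq> Fj j'" using that by (auto simp: Fj_def)
    ultimately show ?thesis by (auto simp: A_def)
  qed
  have finF: "finite (Fj j) \<and> card (Fj j) \<le> Suc j" for j
  proof -
    have sub: "Xp ` Fj j \<subseteq> al ` {..j}" by (auto simp: Fj_def)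
    have injF: "inj_on Xp (Fj j)" using injX by (simp add: inj_on_def)
    have "finite (Xp ` Fj j)" using finite_subset[OF sub] by simp
    hence fin: "finite (Fj j)" using finite_imageD[OF _ injF] by blast
    have "card (Fj j) = card (Xp ` Fj j)" using card_image[OF injF] by simp
    also have "\<dots> \<le> card (al ` {..j})" by (rule card_mono[OF _ sub]) simp
    also have "\<dots> \<le> card {..j}" by (rule card_image_le) simp
    finally show ?thesis using fin by simp
  qed
  have dens: "\<exists>m. 2 * card (pre m ` A j) < 2 ^ m" for j
  proof -
    obtain m1 where m1: "4 * card (pre m1 ` A0 j) < 2 ^ m1"
      using main_est[OF mon deg lam, of "real j"] unfolding A0_def by blast
    define M where "M = m1 + (j + 2)"
    have "card (pre M ` A0 j) \<le> 2 ^ (M - m1) * card (pre m1 ` A0 j)" by (rule pre_grow) (simp add: M_def)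
    hence "4 * card (pre M ` A0 j) \<le> 2 ^ (j + 2) * (4 * card (pre m1 ` A0 j))" by (simp add: M_def)
    also have "\<dots> < 2 ^ (j + 2) * 2 ^ m1" using m1 by (intro mult_strict_left_mono) auto
    also have "\<dots> = 2 ^ M" by (simp add: M_def power_add)
    finally have c4: "4 * card (pre M ` A0 j) < 2 ^ M" .
    have "j < 2 ^ j" by (rule less_exp)
    hence "j + 1 \<le> 2 ^ j" by (simp only: Suc_le_eq Suc_eq_plus1[symmetric])
    hence "4 * (j + 1) \<le> 4 * 2 ^ j" by (rule mult_le_mono2)
    also have "4 * 2 ^ j = (2::nat) ^ (j + 2)" by (simp add: power_add)
    also have "(2::nat) ^ (j + 2) \<le> 2 ^ M" by (rule power_increasing) (auto simp: M_def)
    finally have j4: "4 * (j + 1) \<le> 2 ^ M" .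
    have "card (pre M ` A j) \<le> card (pre M ` A0 j) + card (pre M ` Fj j)"
      unfolding A_def by (rule pre_un)
    also have "card (pre M ` Fj j) \<le> card (Fj j)" using finF by (intro pre_fin_set) auto
    finally have "card (pre M ` A j) \<le> card (pre M ` A0 j) + Suc j" using finF[of j] by linarith
    hence x: "card (pre M ` A j) \<le> card (pre M ` A0 j) + j + 1" by simp
    define P2 where "P2 = (2::nat) ^ M"
    have "2 * card (pre M ` A j) < P2" using x c4 j4 unfolding P2_def[symmetric] by presburger
    hence "2 * card (pre M ` A j) < 2 ^ M" by (simp add: P2_def)
    thus ?thesis by blast
  qed
  have "\<forall>j. \<exists>m0. 2 * card (pre m0 ` A j) < 2 ^ m0 \<and>
     (\<forall>M\<ge>m0. real (card (pre m0 ` A j)) / 2 ^ m0 - real (card (pre M ` A j)) / 2 ^ M \<le> 1 / 2 ^ (j + 3))"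
  proof
    fix j
    show "\<exists>m0. 2 * card (pre m0 ` A j) < 2 ^ m0 \<and>
     (\<forall>M\<ge>m0. real (card (pre m0 ` A j)) / 2 ^ m0 - real (card (pre M ` A j)) / 2 ^ M \<le> 1 / 2 ^ (j + 3))"
      by (rule density_seq[OF dens]) simp
  qed
  then obtain mm where mm: "\<And>j. 2 * card (pre (mm j) ` A j) < 2 ^ (mm j)"
    "\<And>j M. M \<ge> mm j \<Longrightarrow> real (card (pre (mm j) ` A j)) / 2 ^ (mm j) - real (card (pre M ` A j)) / 2 ^ M \<le> 1 / 2 ^ (j + 3)"
    by metis
  define U where "U j = {e. pre (mm j) e \<in> pre (mm j) ` A j}" for j
  have fip: "\<exists>e. \<forall>j\<le>J. e \<notin> U j" for J
    using fip_lemma[of A mm J, OF monoA mm(1) mm(2)] by (auto simp: U_def)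
  have dep: "\<And>j e e'. pre (mm j) e = pre (mm j) e' \<Longrightarrow> e \<in> U j \<Longrightarrow> e' \<in> U j"
    by (auto simp: U_def)
  have "\<exists>e. \<forall>j. e \<notin> U j" by (rule koenig[of mm U, OF dep fip])
  then obtain es where es: "\<And>j. es \<notin> U j" by blast
  have notA: "es \<notin> A j" for j using es[of j] by (auto simp: U_def)
  define xi where "xi = Xp es"
  have tr: "transcendental_over Kset xi"
    unfolding transcendental_over_def
  proof (intro allI impI)
    fix p :: "'a poly" assume p: "p \<noteq> 0 \<and> (\<forall>i. coeff p i \<in> Kset)"
    show "poly p xi \<noteq> 0"
    proof
      assume "poly p xi = 0"
      hence "xi \<in> Alg Kset" using p by (auto simp: Alg_def)
      hence "xi \<in> range al" using ral by auto
      then obtain j where "xi = al j" by blast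
      hence "es \<in> Fj j" by (auto simp: Fj_def xi_def)
      thus False using notA[of j] by (auto simp: A_def)
    qed
  qed
  have ub: "\<not> (\<exists>B. \<forall>n. f (poly (P n) xi) \<le> B)"
  proof
    assume "\<exists>B. \<forall>n. f (poly (P n) xi) \<le> B"
    then obtain B where B: "\<forall>n. f (poly (P n) xi) \<le> B" by blast
    define j where "j = nat \<lceil>B\<rceil>"
    have "B \<le> real j" unfolding j_def by linarith
    hence "es \<in> A0 j" using B by (auto simp: A0_def xi_def Xp_def intro: order_trans)
    thus False using notA[of j] by (auto simp: A_def)
  qed
  show ?thesis using tr ub by blast
qed

end


theorem proposition2p5:
  fixes absv :: "'a::field \<Rightarrow> real" and P :: "nat \<Rightarrow> 'a poly" and \<xi>s :: "'a list"
  assumes "local_field absv"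
    and "\<forall>n. lead_coeff (P n) = 1"
    and "filterlim (\<lambda>n. degree (P n)) at_top sequentially"
  shows "\<exists>\<xi>. transcendental_over (gen_subfield (set \<xi>s)) \<xi> \<and>
             \<not> (\<exists>B. \<forall>n. absv (poly (P n) \<xi>) \<le> B)"
proof -
  have av: "is_abs_value absv" using conjunct1[OF assms(1)[unfolded local_field_def]] .
  have lfI: "lf absv" unfolding lf_def lf_axioms_def av_def using av assms(1) by (intro conjI)
  interpret L: lf absv by (rule lfI)
  obtain s where s: "s \<noteq> 0" "absv s \<le> 1/8" using L.exists_small[of "1/8"] by auto
  have cI: "cantor absv s" unfolding cantor_def cantor_axioms_def using lfI s by (intro conjI)
  interpret C: cantor absv s by (rule cI)
  obtain lam where lam: "absv lam \<ge> 4 * (4 / absv s)^16" using L.exists_large by blast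
  have cK: "countable (gen_subfield (set \<xi>s))" by (rule gen_subfield_countable) (rule countable_finite, simp)
  show ?thesis by (rule C.final[OF assms(2) assms(3) lam cK])
qed


end
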